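(* Let $y\in[0,1]$, $z\in(0,1]$, and $U=H^{(z)}_{12}H^{(y)}_{23}$. Then $$\sup_{\sigma}\ \mathrm{Tr}\big[U(\sigma\otimes|0\rangle\langle0|)U^\dagger\,\big((\mathbb 1-|0\rangle\langle0|)\otimes|0\rangle\langle0|\otimes|0\rangle\langle0|\big)\big]=1-(1-y)(1-z),$$ where the supremum is over all density operators $\sigma$ on the two-mode Fock space (modes $1,2$), and it is attained by the state $$|\phi\rangle=\sqrt{\tfrac{z}{1-(1-y)(1-z)}}\,|10\rangle+\sqrt{\tfrac{y(1-z)}{1-(1-y)(1-z)}}\,|01\rangle.$$ In particular, for $y=1-\frac1{2(1-x)}$, $z=2x$ with $x\in(0,\tfrac12]$, the supremum equals $\frac1{2(1-x)}$.
   Context: Bosonic modes $1,2,3$ with creation operators $\hat a_k^\dagger$ and Fock states $|n\rangle$; in tensor products the factors are modes $1,2,3$ in order, and $\sigma\otimes|0\rangle\langle0|$ means mode $3$ is in the vacuum. For $r\in[0,1]$, $H^{(r)}_{kl}$ is the passive linear-optical unitary fixing the vacuum with $\hat a_k^\dagger\mapsto\sqrt r\,\hat a_k^\dagger+\sqrt{1-r}\,\hat a_l^\dagger$, $\hat a_l^\dagger\mapsto\sqrt{1-r}\,\hat a_k^\dagger-\sqrt r\,\hat a_l^\dagger$. $U=H^{(z)}_{12}H^{(y)}_{23}$ means first $H^{(y)}$ on modes $2,3$, then $H^{(z)}$ on modes $1,2$. The projector $(\mathbb 1-|0\rangle\langle0|)\otimes|00\rangle\langle00|$ corresponds to ideal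 threshold (click/no-click) detectors registering a click on mode $1$ and no click on modes $2,3$. *)

theory Defs
  imports "HOL-Analysis.Analysis"
begin

text \<open>Fock basis of three bosonic modes: occupation triples (n1,n2,n3).
  Modes 1,2,3 are indexed 0,1,2 in matrices.\<close>

type_synonym occ3 = "nat \<times> nat \<times> nat"

definition occ :: "occ3 \<Rightarrow> nat \<Rightarrow> nat" where
  "occ m k = (case m of (a, b, c) \<Rightarrow> if k = 0 then a else if k = 1 then b else c)"

definition tot :: "occ3 \<Rightarrow> nat" where
  "tot m = (case m of (a, b, c) \<Rightarrow> a + b + c)"

text \<open>Mode-transformation matrix of a passive linear-optical unitary:
  it maps a_k^dagger to sum_j M j k a_j^dagger (j,k < 3).
  Matrix of H^(r)_{kl}.\<close>

definition Hmat :: "real \<Rightarrow> nat \<Rightarrow> nat \<Rightarrow> nat \<Rightarrow> nat \<Rightarrow> real" where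
  "Hmat r k l j i =
     (if i = k then (if j = k then sqrt r else if j = l then sqrt (1 - r) else 0)
      else if i = l then (if j = k then sqrt (1 - r) else if j = l then - sqrt r else 0)
      else (if j = i then 1 else 0))"

definition expmats :: "occ3 \<Rightarrow> occ3 \<Rightarrow> (nat \<Rightarrow> nat \<Rightarrow> nat) set" where
  "expmats m n = {c. (\<forall>j k. (3 \<le> j \<or> 3 \<le> k) \<longrightarrow> c j k = 0)
                    \<and> (\<forall>k<3. (\<Sum>j<3. c j k) = occ n k)
                    \<and> (\<forall>j<3. (\<Sum>k<3. c j k) = occ m j)}"

text \<open>Fock-basis matrix element <m| U_M |n> of the passive linear-optical unitary
  with mode matrix M, obtained by expanding
  U_M |n> = prod_k (sum_j M j k a_j^dagger)^(n_k) / sqrt(n_k!) |0>.\<close>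

definition amp :: "(nat \<Rightarrow> nat \<Rightarrow> real) \<Rightarrow> occ3 \<Rightarrow> occ3 \<Rightarrow> real" where
  "amp M m n =
     sqrt (\<Prod>j<3. fact (occ m j)) * sqrt (\<Prod>k<3. fact (occ n k)) *
     (\<Sum>c\<in>expmats m n. \<Prod>j<3. \<Prod>k<3. M j k ^ c j k / fact (c j k))"

text \<open>Action of U_M on a vector of the three-mode Fock space (coefficient function).
  U_M preserves total photon number, so the sum is finite.\<close>

definition lo_apply :: "(nat \<Rightarrow> nat \<Rightarrow> real) \<Rightarrow> (occ3 \<Rightarrow> complex) \<Rightarrow> occ3 \<Rightarrow> complex" where
  "lo_apply M \<Psi> m = (\<Sum>n\<in>{n. tot n = tot m}. complex_of_real (amp M m n) * \<Psi> n)"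

definition U_op :: "real \<Rightarrow> real \<Rightarrow> (occ3 \<Rightarrow> complex) \<Rightarrow> occ3 \<Rightarrow> complex" where
  "U_op y z \<Psi> = lo_apply (Hmat z 0 1) (lo_apply (Hmat y 1 2) \<Psi>)"

definition embed_vac3 :: "(nat \<times> nat \<Rightarrow> complex) \<Rightarrow> occ3 \<Rightarrow> complex" where
  "embed_vac3 \<psi> m = (case m of (a, b, c) \<Rightarrow> if c = 0 then \<psi> (a, b) else 0)"

definition click_proj :: "(occ3 \<Rightarrow> complex) \<Rightarrow> occ3 \<Rightarrow> complex" where
  "click_proj \<Phi> m = (case m of (a, b, c) \<Rightarrow> if a \<noteq> 0 \<and> b = 0 \<and> c = 0 then \<Phi> m else 0)"

definition inner3 :: "(occ3 \<Rightarrow> complex) \<Rightarrow> (occ3 \<Rightarrow> complex) \<Rightarrow> complex" where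
  "inner3 \<Phi> \<Xi> = infsum (\<lambda>m. cnj (\<Phi> m) * \<Xi> m) UNIV"

definition unit_vec2 :: "(nat \<times> nat \<Rightarrow> complex) \<Rightarrow> bool" where
  "unit_vec2 \<psi> \<longleftrightarrow> ((\<lambda>k. (cmod (\<psi> k))\<^sup>2) has_sum 1) UNIV"

text \<open>A density operator sigma on the two-mode Fock space, represented as
  sigma = sum_i p_i |psi_i><psi_i| (countable convex combination of pure states).\<close>

definition is_density :: "(nat \<Rightarrow> real) \<Rightarrow> (nat \<Rightarrow> nat \<times> nat \<Rightarrow> complex) \<Rightarrow> bool" where
  "is_density p \<psi> \<longleftrightarrow> (\<forall>i. 0 \<le> p i) \<and> (p has_sum 1) UNIV \<and> (\<forall>i. unit_vec2 (\<psi> i))"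

text \<open>Tr[U (sigma tensor |0><0|) U^dagger P] = sum_i p_i <U(psi_i,0)| P |U(psi_i,0)>.\<close>

definition click_prob :: "real \<Rightarrow> real \<Rightarrow> (nat \<Rightarrow> real) \<Rightarrow> (nat \<Rightarrow> nat \<times> nat \<Rightarrow> complex) \<Rightarrow> complex" where
  "click_prob y z p \<psi> =
     infsum (\<lambda>i. complex_of_real (p i) *
        inner3 (U_op y z (embed_vac3 (\<psi> i))) (click_proj (U_op y z (embed_vac3 (\<psi> i))))) UNIV"

definition phi_state :: "real \<Rightarrow> real \<Rightarrow> nat \<times> nat \<Rightarrow> complex" where
  "phi_state y z k =
     (if k = (1, 0) then complex_of_real (sqrt (z / (1 - (1 - y) * (1 - z))))
      else if k = (0, 1) then complex_of_real (sqrt (y * (1 - z) / (1 - (1 - y) * (1 - z))))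
      else 0)"

end

theory Submission
  imports Defs
begin

lemma lt3: "{..<(3::nat)} = {0,1,2}" by auto

lemma expmats_finite: "finite (expmats m n)"
proof -
  define N where "N = occ n 0 + occ n 1 + occ n 2"
  let ?S = "{f::nat\<times>nat\<Rightarrow>nat. \<forall>x. (x \<in> {..<3}\<times>{..<3} \<longrightarrow> f x \<in> {..N}) \<and> (x \<notin> {..<3}\<times>{..<3} \<longrightarrow> f x = 0)}"
  have fin: "finite ?S" by (rule finite_set_of_finite_funs) auto
  have sub: "case_prod ` expmats m n \<subseteq> ?S"
  proof
    fix f assume "f \<in> case_prod ` expmats m n"
    then obtain c where c: "c \<in> expmats m n" "f = case_prod c" by auto
    have z: "\<And>j k. (3 \<le> j \<or> 3 \<le> k) \<Longrightarrow> c j k = 0" and cs: "\<And>k. k<3 \<Longrightarrow> (\<Sum>j<3. c j k) = occ n k"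
      using c(1) unfolding expmats_def by auto
    have "c j k \<le> N" if "j < 3" "k < 3" for j k
    proof -
      have "c j k \<le> (\<Sum>j<3. c j k)" using that by (intro member_le_sum) auto
      also have "\<dots> = occ n k" using cs that by auto
      also have "\<dots> \<le> N" proof -
        have "k = 0 \<or> k = 1 \<or> k = 2" using that by auto
        then show ?thesis unfolding N_def by auto
      qed
      finally show ?thesis .
    qed
    then show "f \<in> ?S" using z c(2) by (auto simp: not_less)
  qed
  have inj: "inj (case_prod :: (nat\<Rightarrow>nat\<Rightarrow>nat) \<Rightarrow> _)"
    by (intro injI) (metis curry_case_prod)
  show ?thesis
    using finite_subset[OF sub fin] by (rule finite_imageD) (meson inj inj_on_subset subset_UNIV)
qed


lemma sum3: "(\<Sum>k<(3::nat). f k) = f 0 + f 1 + f 2" by (simp add: lt3 ac_simps)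
lemma prod3: "(\<Prod>k<(3::nat). f k) = f 0 * f 1 * f 2" by (simp add: lt3 ac_simps)

lemma occ_simps[simp]: "occ (a,b,c) 0 = a" "occ (a,b,c) 1 = b" "occ (a,b,c) 2 = c" "occ (a,b,c) (Suc 0) = b" "occ (a,b,c) (Suc (Suc 0)) = c"
  by (auto simp: occ_def)

lemma expmats_Hz:
  assumes "n1 + n2 + n3 = a"
  shows "expmats (a,0,0) (n1,n2,n3) = {\<lambda>j k. if j = 0 \<and> k < 3 then occ (n1,n2,n3) k else 0}"
proof (intro equalityI subsetI)
  fix c assume c: "c \<in> expmats (a,0,0) (n1,n2,n3)"
  have z: "\<And>j k. (3 \<le> j \<or> 3 \<le> k) \<Longrightarrow> c j k = 0"
    and cs: "\<And>k. k<3 \<Longrightarrow> c 0 k + c 1 k + c 2 k = occ (n1,n2,n3) k"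
    and r1: "c 1 0 + c 1 1 + c 1 2 = 0" and r2: "c 2 0 + c 2 1 + c 2 2 = 0"
    using c unfolding expmats_def sum3 by (auto dest: spec[of _ 1] spec[of _ 2])
  have "c j k = (if j = 0 \<and> k < 3 then occ (n1,n2,n3) k else 0)" for j k
  proof (cases "j < 3 \<and> k < 3")
    case True
    then have "j = 0 \<or> j = 1 \<or> j = 2" "k = 0 \<or> k = 1 \<or> k = 2" by auto
    then show ?thesis using r1 r2 cs[of k] True by auto
  next
    case False then show ?thesis using z by auto
  qed
  then show "c \<in> {\<lambda>j k. if j = 0 \<and> k < 3 then occ (n1,n2,n3) k else 0}" by auto
next
  fix c :: "nat \<Rightarrow> nat \<Rightarrow> nat" assume "c \<in> {\<lambda>j k. if j = 0 \<and> k < 3 then occ (n1,n2,n3) k else 0}"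
  then show "c \<in> expmats (a,0,0) (n1,n2,n3)" using assms
    unfolding expmats_def sum3 by (auto simp: occ_def)
qed

lemma amp_Hz:
  assumes "n1 + n2 + n3 = a"
  shows "amp (Hmat z 0 1) (a,0,0) (n1,n2,n3) = sqrt (fact a) * sqrt (fact n1 * fact n2 * fact n3) *
     (sqrt z ^ n1 / fact n1 * (sqrt (1-z) ^ n2 / fact n2) * (0 ^ n3 / fact n3))"
  unfolding amp_def expmats_Hz[OF assms] by (simp add: prod3 Hmat_def)


lemma sum_single_nz:
  assumes "finite E" "\<And>c. c \<in> E \<Longrightarrow> c \<noteq> c0 \<Longrightarrow> f c = 0"
  shows "sum f E = (if c0 \<in> E then f c0 else 0)"
proof (cases "c0 \<in> E")
  case True
  then have "sum f E = f c0 + sum f (E - {c0})" by (simp add: sum.remove assms(1))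
  also have "sum f (E - {c0}) = 0" using assms(2) by (intro sum.neutral) auto
  finally show ?thesis using True by simp
next
  case False then show ?thesis using assms(2) by (auto intro: sum.neutral)
qed

lemma amp_Hy:
  assumes "m1 + m2 = n1 + n2"
  shows "amp (Hmat y 1 2) (n1,n2,0) (m1,m2,0) = (if m1 = n1 then sqrt y ^ n2 else 0)"
proof -
  define c0 :: "nat \<Rightarrow> nat \<Rightarrow> nat" where "c0 = (\<lambda>j k. if j = 0 \<and> k = 0 then n1 else if j = 1 \<and> k = 1 then n2 else (0::nat))"
  define T where "T = (\<lambda>c. \<Prod>j<3. \<Prod>k<3. Hmat y 1 2 j k ^ c j k / fact (c j k))"
  have zero: "T c = 0" if c: "c \<in> expmats (n1,n2,0) (m1,m2,0)" "c \<noteq> c0" for c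
  proof -
    have z: "\<And>j k. (3 \<le> j \<or> 3 \<le> k) \<Longrightarrow> c j k = 0"
      and cs: "\<And>k. k<3 \<Longrightarrow> c 0 k + c 1 k + c 2 k = occ (m1,m2,0) k"
      and rs: "\<And>j. j<3 \<Longrightarrow> c j 0 + c j 1 + c j 2 = occ (n1,n2,0) j"
      using c(1) unfolding expmats_def sum3 by auto
    have "c 0 1 \<noteq> 0 \<or> c 1 0 \<noteq> 0"
    proof (rule ccontr)
      assume h: "\<not> (c 0 1 \<noteq> 0 \<or> c 1 0 \<noteq> 0)"
      have r0: "c 0 0 + c 0 1 + c 0 2 = n1" and r1: "c 1 0 + c 1 1 + c 1 2 = n2" and r2: "c 2 0 + c 2 1 + c 2 2 = 0"
        using rs[of 0] rs[of 1] rs[of 2] by auto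
      have c2: "c 0 2 + c 1 2 + c 2 2 = 0" using cs[of 2] by auto
      have "c j k = c0 j k" for j k
      proof (cases "j < 3 \<and> k < 3")
        case True
        then have "j = 0 \<or> j = 1 \<or> j = 2" "k = 0 \<or> k = 1 \<or> k = 2" by auto
        then show ?thesis using r0 r1 r2 c2 h unfolding c0_def by auto
      next
        case False then show ?thesis using z unfolding c0_def by auto
      qed
      then have "c = c0" by blast
      then show False using c(2) by simp
    qed
    then show ?thesis unfolding T_def by (auto simp: prod3 Hmat_def)
  qed
  have mem: "c0 \<in> expmats (n1,n2,0) (m1,m2,0) \<longleftrightarrow> m1 = n1"
    using assms unfolding expmats_def sum3 c0_def by (auto simp: occ_def)
  have "amp (Hmat y 1 2) (n1,n2,0) (m1,m2,0) = sqrt (fact n1 * fact n2) * sqrt (fact m1 * fact m2) *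
           sum T (expmats (n1,n2,0) (m1,m2,0))"
    unfolding amp_def T_def by (simp add: prod3)
  also have "sum T (expmats (n1,n2,0) (m1,m2,0)) = (if m1 = n1 then T c0 else 0)"
    unfolding mem[symmetric] by (rule sum_single_nz[OF expmats_finite zero])
  also have "T c0 = sqrt y ^ n2 / (fact n1 * fact n2)"
    unfolding T_def c0_def by (simp add: prod3 Hmat_def)
  finally show ?thesis using assms
    by (auto simp: real_sqrt_mult[symmetric])
qed


lemma tot_finite: "finite {n::occ3. tot n = t}"
proof (rule finite_subset)
  show "{n::occ3. tot n = t} \<subseteq> {..t} \<times> {..t} \<times> {..t}" by (auto simp: tot_def)
qed auto

lemma lo_Hy:
  "lo_apply (Hmat y 1 2) (embed_vac3 \<psi>) (n1,n2,0) = complex_of_real (sqrt y ^ n2) * \<psi> (n1,n2)"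
proof -
  have "lo_apply (Hmat y 1 2) (embed_vac3 \<psi>) (n1,n2,0)
     = (if (n1,n2,0) \<in> {n. tot n = tot (n1,n2,0)} then complex_of_real (amp (Hmat y 1 2) (n1,n2,0) (n1,n2,0)) * embed_vac3 \<psi> (n1,n2,0) else 0)"
    unfolding lo_apply_def
  proof (rule sum_single_nz[OF tot_finite])
    fix n :: occ3 assume n: "n \<in> {n. tot n = tot (n1, n2, 0)}" "n \<noteq> (n1,n2,0)"
    obtain m1 m2 m3 where nn: "n = (m1,m2,m3)" by (cases n) auto
    show "complex_of_real (amp (Hmat y 1 2) (n1, n2, 0) n) * embed_vac3 \<psi> n = 0"
    proof (cases "m3 = 0")
      case True
      then have "m1 + m2 = n1 + n2" "m1 \<noteq> n1" using n nn by (auto simp: tot_def)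
      then show ?thesis using True nn amp_Hy[of m1 m2 n1 n2 y] by simp
    qed (simp add: nn embed_vac3_def)
  qed
  then show ?thesis using amp_Hy[of n1 n2 n1 n2 y] by (simp add: embed_vac3_def tot_def)
qed

definition Kc :: "real \<Rightarrow> real \<Rightarrow> nat \<Rightarrow> nat \<Rightarrow> real" where
  "Kc y z a n1 = sqrt (fact a) * sqrt (fact n1 * fact (a - n1)) *
      (sqrt z ^ n1 / fact n1 * (sqrt (1 - z) ^ (a - n1) / fact (a - n1))) * sqrt y ^ (a - n1)"

lemma U_val:
  "U_op y z (embed_vac3 \<psi>) (a,0,0) = (\<Sum>n1\<le>a. complex_of_real (Kc y z a n1) * \<psi> (n1, a - n1))"
proof -
  define F where "F = (\<lambda>n. complex_of_real (amp (Hmat z 0 1) (a,0,0) n) * lo_apply (Hmat y 1 2) (embed_vac3 \<psi>) n)"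
  define g where "g = (\<lambda>n1::nat. (n1, a - n1, 0::nat))"
  have "U_op y z (embed_vac3 \<psi>) (a,0,0) = sum F {n. tot n = a}"
    unfolding U_op_def lo_apply_def F_def by (simp add: tot_def)
  also have "\<dots> = sum F (g ` {..a})"
  proof (rule sum.mono_neutral_right[OF tot_finite])
    show "g ` {..a} \<subseteq> {n. tot n = a}" by (auto simp: g_def tot_def)
    show "\<forall>i\<in>{n. tot n = a} - g ` {..a}. F i = 0"
    proof
      fix n assume n: "n \<in> {n. tot n = a} - g ` {..a}"
      obtain m1 m2 m3 where nn: "n = (m1,m2,m3)" by (cases n) auto
      have "m3 \<noteq> 0"
      proof
        assume "m3 = 0"
        then have "n = g m1" "m1 \<le> a" using n nn by (auto simp: g_def tot_def)
        then show False using n by auto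
      qed
      then show "F n = 0" using n nn amp_Hz[of m1 m2 m3 a z] unfolding F_def by (simp add: tot_def)
    qed
  qed
  also have "\<dots> = sum (F \<circ> g) {..a}"
    by (rule sum.reindex) (auto simp: g_def inj_on_def)
  also have "\<dots> = (\<Sum>n1\<le>a. complex_of_real (Kc y z a n1) * \<psi> (n1, a - n1))"
  proof (rule sum.cong)
    fix x assume "x \<in> {..a}"
    then show "(F \<circ> g) x = complex_of_real (Kc y z a x) * \<psi> (x, a - x)"
      using amp_Hz[of x "a-x" 0 a z] lo_Hy[of y \<psi> x "a-x"] by (simp add: F_def g_def Kc_def)
  qed simp
  finally show ?thesis .
qed


lemma Ksq:
  assumes "0 \<le> y" "0 \<le> z" "z \<le> 1" "n1 \<le> a"
  shows "(Kc y z a n1)\<^sup>2 = real (a choose n1) * z ^ n1 * ((1 - z) * y) ^ (a - n1)"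
proof -
  have sq: "\<And>t::real. 0 \<le> t \<Longrightarrow> (sqrt t ^ k)\<^sup>2 = t ^ k" for k
    by (simp add: power_mult_distrib[symmetric] power_mult[symmetric] mult.commute[of k 2] power_mult)
  have "(Kc y z a n1)\<^sup>2 = fact a * (fact n1 * fact (a - n1)) *
      (z ^ n1 / (fact n1)\<^sup>2 * ((1 - z) ^ (a - n1) / (fact (a - n1))\<^sup>2)) * y ^ (a - n1)"
    unfolding Kc_def using assms
    by (simp add: power_mult_distrib power_divide sq)
  also have "\<dots> = fact a / (fact n1 * fact (a - n1)) * z ^ n1 * ((1 - z) ^ (a - n1) * y ^ (a - n1))"
    by (simp add: field_simps power2_eq_square)
  also have "\<dots> = real (a choose n1) * z ^ n1 * ((1 - z) * y) ^ (a - n1)"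
    using binomial_fact[OF assms(4), where 'a=real] by (simp add: power_mult_distrib)
  finally show ?thesis .
qed

lemma Ksum:
  assumes "0 \<le> y" "0 \<le> z" "z \<le> 1"
  shows "(\<Sum>n1\<le>a. (Kc y z a n1)\<^sup>2) = (1 - (1 - y) * (1 - z)) ^ a"
proof -
  have "(\<Sum>n1\<le>a. (Kc y z a n1)\<^sup>2) = (\<Sum>n1\<le>a. real (a choose n1) * z ^ n1 * ((1 - z) * y) ^ (a - n1))"
    using Ksq[OF assms] by (intro sum.cong) auto
  also have "\<dots> = (z + (1 - z) * y) ^ a" by (rule binomial_ring[symmetric])
  also have "z + (1 - z) * y = 1 - (1 - y) * (1 - z)" by (simp add: algebra_simps)
  finally show ?thesis .
qed

lemma infsum_of_real_c:
  "infsum (\<lambda>x. complex_of_real (f x)) A = complex_of_real (infsum f A)"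
proof (cases "f summable_on A")
  case True
  then show ?thesis by (intro infsumI has_sum_of_real has_sum_infsum)
next
  case False
  have "\<not> (\<lambda>x. complex_of_real (f x)) summable_on A"
  proof
    assume "(\<lambda>x. complex_of_real (f x)) summable_on A"
    from summable_on_bounded_linear[OF bounded_linear_Re this] have "f summable_on A" by simp
    then show False using False by simp
  qed
  then show ?thesis using False by (simp add: infsum_not_exists)
qed

lemma cnj_mult_self: "cnj x * x = complex_of_real ((cmod x)\<^sup>2)"
  by (metis complex_norm_square mult.commute of_real_power)


lemma Uabs_bound:
  assumes "0 \<le> y" "0 \<le> z" "z \<le> 1"
  shows "(cmod (U_op y z (embed_vac3 \<psi>) (a,0,0)))\<^sup>2 \<le>
           (1 - (1 - y) * (1 - z)) ^ a * (\<Sum>n1\<le>a. (cmod (\<psi> (n1, a - n1)))\<^sup>2)"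
proof -
  have "cmod (U_op y z (embed_vac3 \<psi>) (a,0,0)) \<le> (\<Sum>n1\<le>a. \<bar>Kc y z a n1\<bar> * cmod (\<psi> (n1, a - n1)))"
    unfolding U_val by (rule order_trans[OF norm_sum]) (simp add: norm_mult)
  then have "(cmod (U_op y z (embed_vac3 \<psi>) (a,0,0)))\<^sup>2 \<le> (\<Sum>n1\<le>a. \<bar>Kc y z a n1\<bar> * cmod (\<psi> (n1, a - n1)))\<^sup>2"
    by (intro power_mono) auto
  also have "\<dots> \<le> (\<Sum>n1\<le>a. \<bar>Kc y z a n1\<bar>\<^sup>2) * (\<Sum>n1\<le>a. (cmod (\<psi> (n1, a - n1)))\<^sup>2)"
    by (rule Cauchy_Schwarz_ineq_sum)
  also have "(\<Sum>n1\<le>a. \<bar>Kc y z a n1\<bar>\<^sup>2) = (1 - (1 - y) * (1 - z)) ^ a"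
    using Ksum[OF assms] by simp
  finally show ?thesis .
qed

lemma N_sum_bound:
  assumes "unit_vec2 \<psi>" "finite G"
  shows "(\<Sum>a\<in>G. \<Sum>n1\<le>a. (cmod (\<psi> (n1, a - n1)))\<^sup>2) \<le> 1"
proof -
  define e where "e = (\<lambda>(a::nat, n1::nat). (n1, a - n1))"
  have inj: "inj_on e (Sigma G (\<lambda>a. {..a}))"
    by (auto simp: e_def inj_on_def)
  have "(\<Sum>a\<in>G. \<Sum>n1\<le>a. (cmod (\<psi> (n1, a - n1)))\<^sup>2) = (\<Sum>q\<in>Sigma G (\<lambda>a. {..a}). (cmod (\<psi> (e q)))\<^sup>2)"
    by (subst sum.Sigma) (auto simp: e_def assms(2) split_def)
  also have "\<dots> = (\<Sum>q\<in>e ` Sigma G (\<lambda>a. {..a}). (cmod (\<psi> q))\<^sup>2)"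
    by (subst sum.reindex[OF inj]) auto
  also have "\<dots> \<le> 1"
    using assms unfolding unit_vec2_def
    by (intro finite_sum_le_has_sum[where A=UNIV]) auto
  finally show ?thesis .
qed

lemma nat_sum_bound:
  assumes "0 \<le> y" "y \<le> 1" "0 \<le> z" "z \<le> 1" "unit_vec2 \<psi>" "finite G"
  shows "(\<Sum>a\<in>G. if a \<noteq> 0 then (cmod (U_op y z (embed_vac3 \<psi>) (a,0,0)))\<^sup>2 else 0)
           \<le> 1 - (1 - y) * (1 - z)"
proof -
  define s where "s = 1 - (1 - y) * (1 - z)"
  have s0: "0 \<le> s" and s1: "s \<le> 1" unfolding s_def using assms
    by (auto simp: mult_nonneg_nonneg mult_le_one)
  define N where "N = (\<lambda>a. \<Sum>n1\<le>a. (cmod (\<psi> (n1, a - n1)))\<^sup>2)"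
  have N0: "0 \<le> N a" for a unfolding N_def by (auto intro: sum_nonneg)
  have "(\<Sum>a\<in>G. if a \<noteq> 0 then (cmod (U_op y z (embed_vac3 \<psi>) (a,0,0)))\<^sup>2 else 0) \<le> (\<Sum>a\<in>G. s * N a)"
  proof (rule sum_mono)
    fix a assume "a \<in> G"
    show "(if a \<noteq> 0 then (cmod (U_op y z (embed_vac3 \<psi>) (a,0,0)))\<^sup>2 else 0) \<le> s * N a"
    proof (cases "a = 0")
      case False
      have "s ^ a \<le> s ^ 1" using False s0 s1 by (intro power_decreasing) auto
      then have "s ^ a * N a \<le> s * N a" using N0[of a] by (intro mult_right_mono) auto
      then show ?thesis using Uabs_bound[of y z \<psi> a] assms False unfolding s_def N_def by auto
    qed (use s0 N0 in auto)
  qed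
  also have "\<dots> = s * (\<Sum>a\<in>G. N a)" by (simp add: sum_distrib_left)
  also have "\<dots> \<le> s * 1" using N_sum_bound[OF assms(5,6)] s0 unfolding N_def by (intro mult_left_mono) auto
  finally show ?thesis unfolding s_def by simp
qed


definition clickf :: "(occ3 \<Rightarrow> complex) \<Rightarrow> occ3 \<Rightarrow> real" where
  "clickf \<Phi> m = (if fst m \<noteq> 0 \<and> snd m = (0,0) then (cmod (\<Phi> m))\<^sup>2 else 0)"

lemma inner_click: "inner3 \<Phi> (click_proj \<Phi>) = complex_of_real (infsum (clickf \<Phi>) UNIV)"
  unfolding inner3_def infsum_of_real_c[symmetric]
  by (rule infsum_cong) (auto simp: click_proj_def clickf_def cnj_mult_self split: prod.splits)

lemma clickf_fin_bound:
  assumes "0 \<le> y" "y \<le> 1" "0 \<le> z" "z \<le> 1" "unit_vec2 \<psi>" "finite F"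
  shows "sum (clickf (U_op y z (embed_vac3 \<psi>))) F \<le> 1 - (1 - y) * (1 - z)"
proof -
  let ?h = "clickf (U_op y z (embed_vac3 \<psi>))"
  define A where "A = {m\<in>F. snd m = (0,0)}"
  have "sum ?h F = sum ?h A"
    unfolding A_def by (rule sum.mono_neutral_right) (auto simp: assms(6) clickf_def)
  also have "\<dots> = sum (\<lambda>a. ?h (a,0,0)) (fst ` A)"
  proof -
    have inj: "inj_on fst A" unfolding A_def by (auto simp: inj_on_def prod_eq_iff)
    have "sum (\<lambda>a. ?h (a,0,0)) (fst ` A) = sum ((\<lambda>a. ?h (a,0,0)) \<circ> fst) A"
      by (rule sum.reindex[OF inj])
    also have "\<dots> = sum ?h A"
      by (rule sum.cong) (auto simp: A_def prod_eq_iff)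
    finally show ?thesis by simp
  qed
  also have "\<dots> = (\<Sum>a\<in>fst ` A. if a \<noteq> 0 then (cmod (U_op y z (embed_vac3 \<psi>) (a,0,0)))\<^sup>2 else 0)"
    by (simp add: clickf_def)
  also have "\<dots> \<le> 1 - (1 - y) * (1 - z)"
    using assms A_def by (intro nat_sum_bound) auto
  finally show ?thesis .
qed

lemma Pc_bound:
  assumes "0 \<le> y" "y \<le> 1" "0 \<le> z" "z \<le> 1" "unit_vec2 \<psi>"
  shows "infsum (clickf (U_op y z (embed_vac3 \<psi>))) UNIV \<le> 1 - (1 - y) * (1 - z)"
    and "0 \<le> infsum (clickf (U_op y z (embed_vac3 \<psi>))) UNIV"
proof -
  have nn: "\<And>m. 0 \<le> clickf (U_op y z (embed_vac3 \<psi>)) m" by (simp add: clickf_def)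
  have summ: "clickf (U_op y z (embed_vac3 \<psi>)) summable_on UNIV"
    by (rule nonneg_bdd_above_summable_on) (use nn clickf_fin_bound[OF assms] in \<open>auto intro!: bdd_aboveI\<close>)
  show "infsum (clickf (U_op y z (embed_vac3 \<psi>))) UNIV \<le> 1 - (1 - y) * (1 - z)"
    by (rule infsum_le_finite_sums[OF summ]) (use clickf_fin_bound[OF assms] in auto)
  show "0 \<le> infsum (clickf (U_op y z (embed_vac3 \<psi>))) UNIV"
    by (rule infsum_nonneg) (simp add: nn)
qed


lemma click_eq:
  "click_prob y z p \<psi> = complex_of_real (infsum (\<lambda>i. p i * infsum (clickf (U_op y z (embed_vac3 (\<psi> i)))) UNIV) UNIV)"
  unfolding click_prob_def inner_click of_real_mult[symmetric] infsum_of_real_c ..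

lemma click_le:
  assumes "0 \<le> y" "y \<le> 1" "0 \<le> z" "z \<le> 1" "is_density p \<psi>"
  shows "Re (click_prob y z p \<psi>) \<le> 1 - (1 - y) * (1 - z)"
proof -
  define s where "s = 1 - (1 - y) * (1 - z)"
  have s0: "0 \<le> s" unfolding s_def using assms
    by (auto simp: mult_nonneg_nonneg mult_le_one)
  define Q where "Q = (\<lambda>i. infsum (clickf (U_op y z (embed_vac3 (\<psi> i)))) UNIV)"
  have p: "\<And>i. 0 \<le> p i" "(p has_sum 1) UNIV" "\<And>i. unit_vec2 (\<psi> i)"
    using assms(5) unfolding is_density_def by auto
  have Q: "\<And>i. Q i \<le> s" "\<And>i. 0 \<le> Q i" unfolding Q_def s_def using Pc_bound[OF assms(1-4) p(3)] by auto
  have "infsum (\<lambda>i. p i * Q i) UNIV \<le> s"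
  proof (cases "(\<lambda>i. p i * Q i) summable_on UNIV")
    case True
    have ps: "((\<lambda>i. p i * s) has_sum (1 * s)) UNIV"
      using has_sum_cmult_left[OF p(2)] by simp
    have "infsum (\<lambda>i. p i * Q i) UNIV \<le> infsum (\<lambda>i. p i * s) UNIV"
      by (rule infsum_mono[OF True]) (use ps p(1) Q in \<open>auto intro: mult_left_mono simp: summable_on_def\<close>)
    also have "\<dots> = s" using infsumI[OF ps] by simp
    finally show ?thesis .
  next
    case False then show ?thesis using s0 by (simp add: infsum_not_exists)
  qed
  then show ?thesis unfolding click_eq Q_def s_def by simp
qed

lemma has_sum_fin_support:
  fixes f :: "'a \<Rightarrow> 'b::{comm_monoid_add, topological_space}"
  assumes "finite S" "\<And>x. x \<notin> S \<Longrightarrow> f x = 0"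
  shows "(f has_sum sum f S) UNIV"
proof -
  have "(f has_sum sum f S) S" using assms(1) by simp
  then show ?thesis by (subst has_sum_cong_neutral[where T=S and g=f]) (use assms(2) in auto)
qed

lemma sqrt_mul_div: "0 \<le> u \<Longrightarrow> 0 < s \<Longrightarrow> sqrt u * sqrt (u / s) = u / sqrt s"
  by (simp add: real_sqrt_mult[symmetric] real_sqrt_divide)

lemma s_pos: fixes y z :: real assumes "0 \<le> y" "y \<le> 1" "0 < z" "z \<le> 1" shows "0 < 1 - (1 - y) * (1 - z)"
proof -
  have e: "(1 - y) * (1 - z) = (1 - z) - y * (1 - z)" by (simp add: algebra_simps)
  have "0 \<le> y * (1 - z)" using assms by simp
  then show ?thesis using assms e by linarith
qed

lemma phi_click:
  assumes "0 \<le> y" "y \<le> 1" "0 < z" "z \<le> 1"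
  shows "clickf (U_op y z (embed_vac3 (phi_state y z))) m = (if m = (1,0,0) then 1 - (1 - y) * (1 - z) else 0)"
proof -
  define s where "s = 1 - (1 - y) * (1 - z)"
  have sp: "0 < s" unfolding s_def using assms
    by (rule s_pos)
  obtain a b c where m: "m = (a,b,c)" by (cases m) auto
  show ?thesis
  proof (cases "b = 0 \<and> c = 0 \<and> a \<noteq> 0")
    case False then show ?thesis by (auto simp: m clickf_def)
  next
    case True
    show ?thesis
    proof (cases "a = 1")
      case a1: True
      have "U_op y z (embed_vac3 (phi_state y z)) (1,0,0) =
        complex_of_real (Kc y z 1 0 * sqrt (y * (1 - z) / s) + Kc y z 1 1 * sqrt (z / s))"
        unfolding U_val by (simp add: phi_state_def s_def)
      also have "Kc y z 1 0 * sqrt (y * (1 - z) / s) + Kc y z 1 1 * sqrt (z / s) = sqrt s"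
      proof -
        have "Kc y z 1 0 * sqrt (y * (1 - z) / s) = y * (1 - z) / sqrt s"
          unfolding Kc_def using sqrt_mul_div[of "y * (1 - z)" s] assms sp
          by (simp add: real_sqrt_mult mult.commute)
        moreover have "Kc y z 1 1 * sqrt (z / s) = z / sqrt s"
          unfolding Kc_def using sqrt_mul_div[of z s] assms sp by simp
        moreover have "y * (1 - z) / sqrt s + z / sqrt s = sqrt s"
        proof -
          have e2: "y * (1 - z) + z = s" unfolding s_def by (simp add: algebra_simps)
          have "y * (1 - z) / sqrt s + z / sqrt s = s / sqrt s" by (metis add_divide_distrib e2)
          also have "\<dots> = sqrt s" using sp by (simp add: real_div_sqrt)
          finally show ?thesis .
        qed
        ultimately show ?thesis by simp
      qed
      finally show ?thesis using True a1 sp by (simp add: m clickf_def s_def)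
    next
      case False
      have "U_op y z (embed_vac3 (phi_state y z)) (a,0,0) = 0"
        unfolding U_val using True False by (intro sum.neutral) (auto simp: phi_state_def)
      then show ?thesis using True False by (simp add: m clickf_def)
    qed
  qed
qed

lemma phi_Pc:
  assumes "0 \<le> y" "y \<le> 1" "0 < z" "z \<le> 1"
  shows "infsum (clickf (U_op y z (embed_vac3 (phi_state y z)))) UNIV = 1 - (1 - y) * (1 - z)"
proof -
  have "(clickf (U_op y z (embed_vac3 (phi_state y z))) has_sum
          sum (clickf (U_op y z (embed_vac3 (phi_state y z)))) {(1,0,0)}) UNIV"
    by (rule has_sum_fin_support) (auto simp: phi_click[OF assms])
  from infsumI[OF this] show ?thesis by (simp add: phi_click[OF assms])
qed

lemma phi_density:
  assumes "0 \<le> y" "y \<le> 1" "0 < z" "z \<le> 1"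
  shows "is_density (\<lambda>i. if i = 0 then 1 else 0) (\<lambda>_. phi_state y z)"
proof -
  define s where "s = 1 - (1 - y) * (1 - z)"
  have sp: "0 < s" unfolding s_def using assms
    by (rule s_pos)
  have p: "((\<lambda>i::nat. if i = 0 then 1 else 0::real) has_sum 1) UNIV"
    using has_sum_fin_support[of "{0::nat}" "\<lambda>i::nat. if i = 0 then 1 else 0::real"] by simp
  have u: "unit_vec2 (phi_state y z)"
  proof -
    have h: "((\<lambda>k. (cmod (phi_state y z k))\<^sup>2) has_sum
          sum (\<lambda>k. (cmod (phi_state y z k))\<^sup>2) {(1,0),(0,1)}) UNIV"
      by (rule has_sum_fin_support) (auto simp: phi_state_def)
    have "sum (\<lambda>k. (cmod (phi_state y z k))\<^sup>2) {(1,0),(0,1)} = z / s + y * (1 - z) / s"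
      using assms sp by (simp add: phi_state_def s_def)
    also have "\<dots> = 1"
    proof -
      have e2: "z + y * (1 - z) = s" unfolding s_def by (simp add: algebra_simps)
      have "z / s + y * (1 - z) / s = s / s" by (metis add_divide_distrib e2)
      then show ?thesis using sp by simp
    qed
    finally show ?thesis using h unfolding unit_vec2_def by simp
  qed
  show ?thesis unfolding is_density_def using p u by auto
qed

lemma phi_prob:
  assumes "0 \<le> y" "y \<le> 1" "0 < z" "z \<le> 1"
  shows "click_prob y z (\<lambda>i. if i = 0 then 1 else 0) (\<lambda>_. phi_state y z) = complex_of_real (1 - (1 - y) * (1 - z))"
proof -
  let ?g = "\<lambda>i::nat. (if i = 0 then 1 else 0) * infsum (clickf (U_op y z (embed_vac3 (phi_state y z)))) UNIV"
  have "(?g has_sum sum ?g {0}) UNIV" by (rule has_sum_fin_support) auto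
  then have "infsum ?g UNIV = 1 - (1 - y) * (1 - z)" using phi_Pc[OF assms] by (simp add: infsumI)
  then show ?thesis unfolding click_eq by simp
qed

lemma sup_gen:
  assumes "0 \<le> y" "y \<le> 1" "0 < z" "z \<le> 1"
  shows "Sup {Re (click_prob y z p \<psi>) | p \<psi>. is_density p \<psi>} = 1 - (1 - y) * (1 - z)"
proof (rule cSup_eq_maximum)
  show "1 - (1 - y) * (1 - z) \<in> {Re (click_prob y z p \<psi>) | p \<psi>. is_density p \<psi>}"
    using phi_density[OF assms] phi_prob[OF assms] by force
  show "\<And>x. x \<in> {Re (click_prob y z p \<psi>) | p \<psi>. is_density p \<psi>} \<Longrightarrow> x \<le> 1 - (1 - y) * (1 - z)"
    using click_le assms by auto
qed

theorem mainTheorem3: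
  fixes y z :: real
  assumes "0 \<le> y" "y \<le> 1" "0 < z" "z \<le> 1"
  shows "(\<forall>p \<psi>. is_density p \<psi> \<longrightarrow> click_prob y z p \<psi> \<in> \<real>)
    \<and> Sup {Re (click_prob y z p \<psi>) | p \<psi>. is_density p \<psi>} = 1 - (1 - y) * (1 - z)
    \<and> is_density (\<lambda>i. if i = 0 then 1 else 0) (\<lambda>_. phi_state y z)
    \<and> click_prob y z (\<lambda>i. if i = 0 then 1 else 0) (\<lambda>_. phi_state y z)
        = complex_of_real (1 - (1 - y) * (1 - z))
    \<and> (\<forall>x::real. 0 < x \<and> x \<le> 1/2 \<longrightarrow>
         Sup {Re (click_prob (1 - 1 / (2 * (1 - x))) (2 * x) p \<psi>) | p \<psi>. is_density p \<psi>}
           = 1 / (2 * (1 - x)))"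
proof (intro conjI allI impI)
  fix p \<psi> show "click_prob y z p \<psi> \<in> \<real>" unfolding click_eq by simp
next
  show "Sup {Re (click_prob y z p \<psi>) | p \<psi>. is_density p \<psi>} = 1 - (1 - y) * (1 - z)"
    by (rule sup_gen[OF assms])
next
  show "is_density (\<lambda>i. if i = 0 then 1 else 0) (\<lambda>_. phi_state y z)" by (rule phi_density[OF assms])
next
  show "click_prob y z (\<lambda>i. if i = 0 then 1 else 0) (\<lambda>_. phi_state y z) = complex_of_real (1 - (1 - y) * (1 - z))"
    by (rule phi_prob[OF assms])
next
  fix x :: real assume x: "0 < x \<and> x \<le> 1/2"
  have h1: "1 / (2 * (1 - x)) \<le> 1" using x by (simp add: field_simps)
  have h0: "0 < 1 / (2 * (1 - x))" using x by simp
  have "Sup {Re (click_prob (1 - 1 / (2 * (1 - x))) (2 * x) p \<psi>) | p \<psi>. is_density p \<psi>}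
     = 1 - (1 - (1 - 1 / (2 * (1 - x)))) * (1 - 2 * x)"
    by (rule sup_gen) (use x h1 h0 in auto)
  also have "\<dots> = 1 / (2 * (1 - x))" using x by (simp add: field_simps)
  finally show "Sup {Re (click_prob (1 - 1 / (2 * (1 - x))) (2 * x) p \<psi>) | p \<psi>. is_density p \<psi>}
           = 1 / (2 * (1 - x))" .
qed

end
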